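(* Assume the Dickson--Hardy--Littlewood conjecture: every admissible tuple $(h_1,\dots,h_k)$ of natural numbers is prime-producing. Then there exists an infinite set $B$ of primes such that $b+b'+1$ is prime for every pair of distinct $b,b' \in B$.
   Context: A tuple $(h_1,\dots,h_k)$ of natural numbers is admissible if for every prime $p$ there is at least one residue class mod $p$ containing none of $h_1,\dots,h_k$. A tuple $(h_1,\dots,h_k)$ is prime-producing if there are infinitely many integers $n$ such that $n+h_1,\dots,n+h_k$ are all prime. *)

theory Defs
  imports "HOL-Computational_Algebra.Primes"
begin

definition admissible :: "nat list \<Rightarrow> bool" where
  "admissible hs \<longleftrightarrow>
     (\<forall>p::nat. prime p \<longrightarrow> (\<exists>r<p. \<forall>h\<in>set hs. h mod p \<noteq> r))"

definition prime_producing :: "nat list \<Rightarrow> bool" where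
  "prime_producing hs \<longleftrightarrow>
     infinite {n::int. \<forall>h\<in>set hs. prime (n + int h)}"

definition DHL :: bool where
  "DHL \<longleftrightarrow> (\<forall>hs. admissible hs \<longrightarrow> prime_producing hs)"

end

theory Submission
  imports Defs "HOL-Number_Theory.Cong"
begin

lemma aux_exists:
  fixes p r Z :: nat
  assumes "prime p" "r < p"
  shows "\<exists>a. a mod p = r \<and> (\<forall>q. prime q \<and> q \<le> Z \<and> q \<noteq> p \<longrightarrow> a mod q = 0)"
proof -
  define Q where "Q = {q::nat. prime q \<and> q \<le> Z \<and> q \<noteq> p}"
  have fin: "finite Q" unfolding Q_def by auto
  have cop: "coprime (\<Prod>q\<in>Q. q) p"
    by (rule prod_coprime_left) (use assms in \<open>auto simp: Q_def intro: primes_coprime\<close>)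
  then obtain x where x: "[(\<Prod>q\<in>Q. q) * x = Suc 0] (mod p)"
    using cong_solve_coprime_nat by blast
  define a where "a = (\<Prod>q\<in>Q. q) * x * r"
  have "[a = Suc 0 * r] (mod p)" unfolding a_def by (rule cong_mult[OF x cong_refl])
  hence "a mod p = r" using assms(2) by (simp add: cong_def)
  moreover have "a mod q = 0" if "prime q" "q \<le> Z" "q \<noteq> p" for q
  proof -
    have "q \<in> Q" using that by (auto simp: Q_def)
    hence "q dvd (\<Prod>q\<in>Q. q)" using fin by (auto intro: dvd_prodI)
    thus ?thesis unfolding a_def by auto
  qed
  ultimately show ?thesis by blast
qed

lemma missing_residue:
  fixes p :: nat
  assumes "finite S" "card ((\<lambda>h. h mod p) ` S) < p"
  shows "\<exists>r<p. \<forall>h\<in>S. h mod p \<noteq> r"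
proof -
  have "(\<lambda>h. h mod p) ` S \<noteq> {..<p}" using assms(2) by auto
  moreover have "p > 0" using assms(2) by auto
  hence "(\<lambda>h. h mod p) ` S \<subseteq> {..<p}" by auto
  ultimately obtain r where "r < p" "r \<notin> (\<lambda>h. h mod p) ` S" by blast
  thus ?thesis by blast
qed

lemma mod_zero_unique:
  fixes x t p :: nat
  assumes "x < p" "(x + t) mod p = 0"
  shows "x = (p - t mod p) mod p"
proof -
  have "(x + t mod p) mod p = 0" using assms(2) by (simp add: mod_add_right_eq)
  then obtain k where k: "x + t mod p = p * k" by (auto elim!: dvdE simp: mod_eq_0_iff_dvd)
  moreover have "t mod p < p" using assms(1) by simp
  ultimately have "p * k < p * 2" using assms(1) by linarith
  hence "k < 2" by simp
  hence "k = 0 \<or> k = 1" by auto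
  hence "x + t mod p = 0 \<or> x + t mod p = p" using k by auto
  thus ?thesis using assms(1) by auto
qed

definition Inv :: "nat \<Rightarrow> (nat \<Rightarrow> nat) \<Rightarrow> bool" where
  "Inv k b \<longleftrightarrow> (\<forall>i<k. prime (b i)) \<and> (\<forall>i<k. \<forall>l<k. i \<noteq> l \<longrightarrow> prime (b i + b l + 1))
     \<and> (\<forall>i<k. 2*i+3 < b i) \<and> (\<forall>i<k. \<forall>l<k. i < l \<longrightarrow> b i < b l)
     \<and> (\<forall>p i l. prime p \<longrightarrow> i<k \<longrightarrow> l<k \<longrightarrow> p \<le> 2*i+3 \<longrightarrow> p \<le> 2*l+3 \<longrightarrow> b i mod p = b l mod p)
     \<and> (\<forall>p i. prime p \<longrightarrow> i<k \<longrightarrow> p \<le> 2*i+3 \<longrightarrow> (2*b i+1) mod p \<noteq> 0)"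

lemma prime_not_dvd_big:
  fixes p q :: nat
  assumes "prime p" "prime q" "p < q"
  shows "q mod p \<noteq> 0"
  using assms primes_dvd_imp_eq[of p q] by (auto simp: mod_eq_0_iff_dvd)

lemma choose_c:
  assumes inv: "Inv k b" and p: "prime p" "p \<le> 2*k+3"
  shows "\<exists>c<p. c \<noteq> 0 \<and> (2*c+1) mod p \<noteq> 0 \<and> (\<forall>e<k. (c + b e + 1) mod p \<noteq> 0)
            \<and> (\<forall>i<k. p \<le> 2*i+3 \<longrightarrow> b i mod p = c)"
proof (cases "\<exists>i<k. p \<le> 2*i+3")
  case True
  then obtain i where i: "i < k" "p \<le> 2*i+3" by blast
  have p0: "p > 0" using p prime_gt_0_nat by blast
  define c where "c = b i mod p"
  have cc: "[c = b i] (mod p)" unfolding c_def by (simp add: cong_def)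
  have bi: "prime (b i)" "2*i+3 < b i" using inv i by (auto simp: Inv_def)
  have f1: "c \<noteq> 0" unfolding c_def using prime_not_dvd_big[OF p(1) bi(1)] bi(2) i(2) by linarith
  have c2: "(2*c+1) mod p = (2*b i+1) mod p"
  proof -
    have "[c = b i] (mod p)" unfolding c_def by (simp add: cong_def)
    hence "[2*c+1 = 2*b i+1] (mod p)" by (intro cong_add cong_mult cong_refl)
    thus ?thesis by (simp add: cong_def)
  qed
  have nz: "(2*b i+1) mod p \<noteq> 0" using inv i p by (auto simp: Inv_def)
  have f2: "(2*c+1) mod p \<noteq> 0" using c2 nz by simp
  have f3: "\<forall>e<k. (c + b e + 1) mod p \<noteq> 0"
  proof (intro allI impI)
  fix e assume e: "e < k"
  show "(c + b e + 1) mod p \<noteq> 0"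
  proof (cases "e = i")
    case True
    have "[c + b e + 1 = b i + b i + 1] (mod p)" unfolding True by (intro cong_add cc cong_refl)
    hence "(c + b e + 1) mod p = (b i + b i + 1) mod p" by (simp add: cong_def)
    also have "b i + b i + 1 = 2*b i+1" by simp
    finally show ?thesis using \<open>(2*b i+1) mod p \<noteq> 0\<close> by simp
  next
    case False
    have pr: "prime (b i + b e + 1)" using inv e i False by (auto simp: Inv_def)
    have "[c + b e + 1 = b i + b e + 1] (mod p)" by (intro cong_add cc cong_refl)
    hence "(c + b e + 1) mod p = (b i + b e + 1) mod p" by (simp add: cong_def)
    moreover have "(b i + b e + 1) mod p \<noteq> 0"
      using prime_not_dvd_big[OF p(1) pr] bi(2) i(2) by linarith
    ultimately show ?thesis by simp
  qed
  qed
  have f4: "\<forall>j<k. p \<le> 2*j+3 \<longrightarrow> b j mod p = c"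
  proof (intro allI impI)
    fix j assume "j < k" "p \<le> 2*j+3"
    have "\<forall>p i l. prime p \<longrightarrow> i<k \<longrightarrow> l<k \<longrightarrow> p \<le> 2*i+3 \<longrightarrow> p \<le> 2*l+3 \<longrightarrow> b i mod p = b l mod p"
      using inv unfolding Inv_def by blast
    thus "b j mod p = c" unfolding c_def using \<open>j<k\<close> \<open>p \<le> 2*j+3\<close> i p(1) by blast
  qed
  have f0: "c < p" using p0 c_def by simp
  have "c < p \<and> c \<noteq> 0 \<and> (2*c+1) mod p \<noteq> 0 \<and> (\<forall>e<k. (c + b e + 1) mod p \<noteq> 0)
            \<and> (\<forall>i<k. p \<le> 2*i+3 \<longrightarrow> b i mod p = c)" using f0 f1 f2 f3 f4 by blast
  then show ?thesis by (rule exI)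
next
  case False
  hence late: "\<forall>i<k. 2*i+3 < p" by auto
  show ?thesis
  proof (cases "p = 2")
    case True
    then have "k = 0" using late by (cases k) auto
    then show ?thesis using True by (intro exI[of _ 1]) auto
  next
    case p2: False
    have p3: "p \<ge> 3" using p(1) p2 prime_ge_2_nat[OF p(1)] by linarith
    have pk: "p \<ge> k + 3"
    proof (cases k)
      case 0 then show ?thesis using p3 by simp
    next
      case (Suc j) then show ?thesis using late[rule_format, of j] by simp
    qed
    define Bad where "Bad = {0, (p-1) div 2} \<union> (\<lambda>e. (p - (b e + 1) mod p) mod p) ` {..<k}"
    have "card Bad \<le> 2 + k"
    proof -
      have "card Bad \<le> card {0::nat, (p-1) div 2} + card ((\<lambda>e. (p - (b e + 1) mod p) mod p) ` {..<k})"
        unfolding Bad_def by (rule card_Un_le)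
      also have "\<dots> \<le> 2 + k" using card_image_le[of "{..<k}" "\<lambda>e. (p - (b e + 1) mod p) mod p"]
        by (simp add: card_insert_if)
      finally show ?thesis .
    qed
    hence "Bad \<noteq> {..<p}" using pk by auto
    moreover have "Bad \<subseteq> {..<p}" unfolding Bad_def using p3 by auto
    ultimately obtain c where c: "c < p" "c \<notin> Bad" by blast
    have f1: "c \<noteq> 0" using c by (auto simp: Bad_def)
    have f2: "(2*c+1) mod p \<noteq> 0"
    proof
      assume "(2*c+1) mod p = 0"
      then obtain m where m: "2*c+1 = p*m" by (auto elim!: dvdE simp: mod_eq_0_iff_dvd)
      have "p * m < p * 2" using m c(1) by linarith
      hence "m < 2" by simp
      moreover have "m \<noteq> 0" using m by (cases m) auto
      ultimately have "m = 1" by auto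
      hence "c = (p-1) div 2" using m by simp
      thus False using c by (auto simp: Bad_def)
    qed
    have f3: "(c + b e + 1) mod p \<noteq> 0" if "e < k" for e
    proof
      assume "(c + b e + 1) mod p = 0"
      hence "(c + (b e + 1)) mod p = 0" by (simp add: add.assoc)
      from mod_zero_unique[OF c(1) this] have "c = (p - (b e + 1) mod p) mod p" .
      thus False using c that by (auto simp: Bad_def)
    qed
    have f4: "\<forall>i<k. p \<le> 2*i+3 \<longrightarrow> b i mod p = c" using late by auto
    have "c < p \<and> c \<noteq> 0 \<and> (2*c+1) mod p \<noteq> 0 \<and> (\<forall>e<k. (c + b e + 1) mod p \<noteq> 0)
            \<and> (\<forall>i<k. p \<le> 2*i+3 \<longrightarrow> b i mod p = c)" using c(1) f1 f2 f3 f4 by blast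
    then show ?thesis by (rule exI)
  qed
qed

lemma inv_extend:
  assumes inv: "Inv k b" and xp: "prime x" and xe: "\<And>e. e<k \<Longrightarrow> prime (x + b e + 1)"
    and x2: "2*k+3 < x" and xb: "\<And>i. i<k \<Longrightarrow> b i < x"
    and M5: "\<And>p l. prime p \<Longrightarrow> l<k \<Longrightarrow> p \<le> 2*l+3 \<Longrightarrow> p \<le> 2*k+3 \<Longrightarrow> b l mod p = x mod p"
    and xc2: "\<And>p. prime p \<Longrightarrow> p \<le> 2*k+3 \<Longrightarrow> (2*x+1) mod p \<noteq> 0"
  shows "Inv (Suc k) (b(k:=x))"
proof -
  have I1: "\<forall>i<k. prime (b i)" and I2: "\<forall>i<k. \<forall>l<k. i \<noteq> l \<longrightarrow> prime (b i + b l + 1)"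
    and I3: "\<forall>i<k. 2*i+3 < b i" and I4: "\<forall>i<k. \<forall>l<k. i < l \<longrightarrow> b i < b l"
    and I5: "\<forall>p i l. prime p \<longrightarrow> i<k \<longrightarrow> l<k \<longrightarrow> p \<le> 2*i+3 \<longrightarrow> p \<le> 2*l+3 \<longrightarrow> b i mod p = b l mod p"
    and I6: "\<forall>p i. prime p \<longrightarrow> i<k \<longrightarrow> p \<le> 2*i+3 \<longrightarrow> (2*b i+1) mod p \<noteq> 0"
    using inv unfolding Inv_def by blast+
  have bk: "(b(k:=x)) k = x" by simp
  have bo: "\<And>i. i \<noteq> k \<Longrightarrow> (b(k:=x)) i = b i" by simp
  show ?thesis unfolding Inv_def
  proof (intro conjI allI impI)
    fix i assume i: "i < Suc k"
    show "prime ((b(k:=x)) i)"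
    proof (cases "i = k")
      case True then show ?thesis using xp bk by simp
    next
      case False
      hence "i < k" using i by simp
      then show ?thesis unfolding bo[OF False] using I1 by blast
    qed
  next
    fix i l assume il: "i < Suc k" "l < Suc k" "i \<noteq> l"
    show "prime ((b(k:=x)) i + (b(k:=x)) l + 1)"
    proof (cases "i = k")
      case True
      hence lk: "l \<noteq> k" "l < k" using il by auto
      show ?thesis unfolding True bk bo[OF lk(1)] by (rule xe[OF lk(2)])
    next
      case False
      hence i: "i < k" using il by simp
      show ?thesis
      proof (cases "l = k")
        case True
        have e: "b i + x + 1 = x + b i + 1" by simp
        show ?thesis unfolding True bk bo[OF False] e by (rule xe[OF i])
      next
        case lF: False
        hence "l < k" using il by simp
        then show ?thesis unfolding bo[OF lF] bo[OF False] using I2 i il(3) by blast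
      qed
    qed
  next
    fix i assume i: "i < Suc k"
    show "2*i+3 < (b(k:=x)) i"
    proof (cases "i = k")
      case True then show ?thesis using x2 bk by simp
    next
      case False
      hence "i < k" using i by simp
      then show ?thesis unfolding bo[OF False] using I3 by blast
    qed
  next
    fix i l assume il: "i < Suc k" "l < Suc k" "i < l"
    hence i: "i < k" "i \<noteq> k" by auto
    show "(b(k:=x)) i < (b(k:=x)) l"
    proof (cases "l = k")
      case True show ?thesis unfolding True bk bo[OF i(2)] by (rule xb[OF i(1)])
    next
      case False
      hence "l < k" using il by simp
      then show ?thesis unfolding bo[OF False] bo[OF i(2)] using I4 i(1) il(3) by blast
    qed
  next
    fix p i l assume pil: "prime p" "i < Suc k" "l < Suc k" "p \<le> 2*i+3" "p \<le> 2*l+3"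
    show "(b(k:=x)) i mod p = (b(k:=x)) l mod p"
    proof (cases "i = k")
      case True
      show ?thesis
      proof (cases "l = k")
        case True then show ?thesis using \<open>i = k\<close> by simp
      next
        case False
        hence "l < k" using pil by simp
        have "p \<le> 2*k+3" using pil True by simp
        then show ?thesis unfolding \<open>i = k\<close> bk bo[OF False]
          using M5[OF pil(1) \<open>l < k\<close> pil(5)] by simp
      qed
    next
      case False
      hence i: "i < k" using pil by simp
      show ?thesis
      proof (cases "l = k")
        case True
        have "p \<le> 2*k+3" using pil i by simp
        then show ?thesis unfolding True bk bo[OF False] using M5[OF pil(1) i pil(4)] by simp
      next
        case lF: False
        hence "l < k" using pil by simp
        then show ?thesis unfolding bo[OF lF] bo[OF False] using I5 pil(1,4,5) i by blast
      qed
    qed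
  next
    fix p i assume pi: "prime p" "i < Suc k" "p \<le> 2*i+3"
    show "(2*(b(k:=x)) i+1) mod p \<noteq> 0"
    proof (cases "i = k")
      case True then show ?thesis unfolding True bk using xc2[OF pi(1)] pi(3) True by simp
    next
      case False
      hence "i < k" using pi by simp
      then show ?thesis unfolding bo[OF False] using I6 pi(1,3) by blast
    qed
  qed
qed

lemma step:
  assumes dhl: "DHL" and inv: "Inv k b"
  shows "\<exists>x. Inv (Suc k) (b(k:=x))"
proof -
  have "\<forall>p. \<exists>c. prime p \<and> p \<le> 2*k+3 \<longrightarrow> c<p \<and> c \<noteq> 0 \<and> (2*c+1) mod p \<noteq> 0 \<and> (\<forall>e<k. (c + b e + 1) mod p \<noteq> 0)
            \<and> (\<forall>i<k. p \<le> 2*i+3 \<longrightarrow> b i mod p = c)"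
    using choose_c[OF inv] by blast
  then obtain c where c: "\<And>p. prime p \<Longrightarrow> p \<le> 2*k+3 \<Longrightarrow> c p<p \<and> c p \<noteq> 0 \<and> (2*c p+1) mod p \<noteq> 0
      \<and> (\<forall>e<k. (c p + b e + 1) mod p \<noteq> 0) \<and> (\<forall>i<k. p \<le> 2*i+3 \<longrightarrow> b i mod p = c p)"
    by metis
  define Z where "Z = 2 + k + (2*k+4)^2"
  have "(2*k+4)*1 \<le> (2*k+4)*(2*k+4)" by (rule mult_le_mono2) simp
  hence "2*k+4 \<le> (2*k+4)^2" by (simp only: power2_eq_square mult_1_right)
  hence Zbig: "2*k+3 < Z" unfolding Z_def by linarith
  have "\<forall>p r. \<exists>a. prime p \<and> r < p \<longrightarrow> a mod p = r \<and> (\<forall>q. prime q \<and> q \<le> Z \<and> q \<noteq> p \<longrightarrow> a mod q = 0)"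
    using aux_exists by blast
  then obtain a where a: "\<And>p r. prime p \<Longrightarrow> r < p \<Longrightarrow> a p r mod p = r \<and> (\<forall>q. prime q \<and> q \<le> Z \<and> q \<noteq> p \<longrightarrow> a p r mod q = 0)"
    by metis
  define D where "D = {(p,r). prime p \<and> p \<le> 2*k+3 \<and> r < p \<and> r \<noteq> (p - c p) mod p}"
  define A where "A = (\<lambda>(p,r). a p r) ` D"
  define T where "T = insert 0 ((\<lambda>e. b e + 1) ` {..<k} \<union> A)"
  have Dsub: "D \<subseteq> {..2*k+3} \<times> {..2*k+3}" unfolding D_def by auto
  have finD: "finite D" by (rule finite_subset[OF Dsub]) auto
  have "card D \<le> card ({..2*k+3} \<times> {..2*k+3})" by (rule card_mono[OF _ Dsub]) auto
  also have "\<dots> = (2*k+4)^2" by (simp add: card_cartesian_product power2_eq_square add.commute)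
  finally have cardD: "card D \<le> (2*k+4)^2" .
  have finA: "finite A" unfolding A_def using finD by simp
  have cardA: "card A \<le> (2*k+4)^2" unfolding A_def using card_image_le[OF finD] cardD le_trans by blast
  have finT: "finite T" unfolding T_def using finA by simp
  have "card T \<le> Suc (card ((\<lambda>e. b e + 1) ` {..<k} \<union> A))" unfolding T_def by (rule card_insert_le_m1) auto
  also have "\<dots> \<le> Suc (card ((\<lambda>e. b e + 1) ` {..<k}) + card A)" using card_Un_le by simp
  also have "\<dots> \<le> Suc (k + card A)" using card_image_le[of "{..<k}" "\<lambda>e. b e + 1"] by simp
  finally have cardT: "card T < Z" unfolding Z_def using cardA by linarith
  define hs where "hs = sorted_list_of_set T"
  have setT: "set hs = T" unfolding hs_def using finT by simp
  have adm: "admissible hs"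
    unfolding admissible_def setT
  proof (intro allI impI)
    fix p :: nat assume p: "prime p"
    show "\<exists>r<p. \<forall>h\<in>T. h mod p \<noteq> r"
    proof (cases "p \<le> 2*k+3")
      case True
      note cp = c[OF p True]
      have p0: "p > 0" using p prime_gt_0_nat by blast
      define r where "r = (p - c p) mod p"
      have r: "r = p - c p" using cp unfolding r_def by simp
      have "\<forall>h\<in>T. h mod p \<noteq> r"
      proof
        fix h assume "h \<in> T"
        then consider "h = 0" | e where "e < k" "h = b e + 1" | q s where "(q,s) \<in> D" "h = a q s"
          unfolding T_def A_def by auto
        then show "h mod p \<noteq> r"
        proof cases
          case 1 then show ?thesis using r cp by simp
        next
          case (2 e)
          show ?thesis
          proof
            assume "h mod p = r"
            hence "(c p + (b e + 1) mod p) mod p = (c p + (p - c p)) mod p" using 2 r by simp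
            hence "(c p + (b e + 1)) mod p = 0" using cp by (simp add: mod_add_right_eq)
            thus False using cp 2 by (auto simp: add.assoc)
          qed
        next
          case (3 q s)
          have q: "prime q" "q \<le> 2*k+3" "s < q" "s \<noteq> (q - c q) mod q" using 3 by (auto simp: D_def)
          show ?thesis
          proof (cases "q = p")
            case True then show ?thesis using a[OF q(1) q(3)] q(4) 3 r_def by simp
          next
            case False
            have "p \<le> Z" using True Zbig by linarith
            hence "h mod p = 0" using a[OF q(1) q(3)] False p 3 by auto
            then show ?thesis using r cp by simp
          qed
        qed
      qed
      moreover have "r < p" using r cp by simp
      ultimately show ?thesis by blast
    next
      case False
      show ?thesis
      proof (rule missing_residue[OF finT])
        show "card ((\<lambda>h. h mod p) ` T) < p"
        proof (cases "p \<le> Z")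
          case True
          have "(\<lambda>h. h mod p) ` T \<subseteq> insert 0 ((\<lambda>e. (b e + 1) mod p) ` {..<k})"
          proof
            fix y assume "y \<in> (\<lambda>h. h mod p) ` T"
            then obtain h where h: "h \<in> T" "y = h mod p" by blast
            then consider "h = 0" | e where "e < k" "h = b e + 1" | q s where "(q,s) \<in> D" "h = a q s"
              unfolding T_def A_def by auto
            then show "y \<in> insert 0 ((\<lambda>e. (b e + 1) mod p) ` {..<k})"
            proof cases
              case 1 then show ?thesis using h by simp
            next
              case (2 e) then show ?thesis using h by simp
            next
              case (3 q s)
              have q: "prime q" "q \<le> 2*k+3" "s < q" using 3 by (auto simp: D_def)
              have "q \<noteq> p" using q False by auto
              hence "h mod p = 0" using a[OF q(1) q(3)] True p 3 by auto
              then show ?thesis using h by simp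
            qed
          qed
          hence "card ((\<lambda>h. h mod p) ` T) \<le> card (insert 0 ((\<lambda>e. (b e + 1) mod p) ` {..<k}))"
            by (rule card_mono[rotated]) auto
          also have "\<dots> \<le> Suc (card ((\<lambda>e. (b e + 1) mod p) ` {..<k}))" by (rule card_insert_le_m1) auto
          also have "\<dots> \<le> Suc k" using card_image_le[of "{..<k}" "\<lambda>e. (b e + 1) mod p"] by simp
          finally show ?thesis using False by linarith
        next
          case False
          have "card ((\<lambda>h. h mod p) ` T) \<le> card T" using card_image_le[OF finT] .
          then show ?thesis using cardT False by linarith
        qed
      qed
    qed
  qed
  have inf: "infinite {n::int. \<forall>h\<in>T. prime (n + int h)}"
    using dhl adm unfolding DHL_def prime_producing_def by (metis setT)
  define N0 where "N0 = Z + (\<Sum>i<k. b i)"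
  have "\<exists>n\<in>{n::int. \<forall>h\<in>T. prime (n + int h)}. n > int N0"
  proof (rule ccontr)
    assume "\<not> ?thesis"
    hence le: "\<And>n. \<forall>h\<in>T. prime (n + int h) \<Longrightarrow> n \<le> int N0" by (auto simp: not_less)
    have "{n::int. \<forall>h\<in>T. prime (n + int h)} \<subseteq> {2..int N0}"
    proof
      fix n :: int assume "n \<in> {n::int. \<forall>h\<in>T. prime (n + int h)}"
      hence h: "\<forall>h\<in>T. prime (n + int h)" by simp
      hence "prime n" unfolding T_def by auto
      hence "2 \<le> n" using prime_ge_2_int by blast
      thus "n \<in> {2..int N0}" using le[OF h] by simp
    qed
    hence "finite {n::int. \<forall>h\<in>T. prime (n + int h)}" by (rule finite_subset) simp
    thus False using inf by blast
  qed
  then obtain n where n: "\<forall>h\<in>T. prime (n + int h)" "n > int N0" by blast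
  define x where "x = nat n"
  have nx: "n = int x" unfolding x_def using n(2) by simp
  have xT: "prime (x + h)" if "h \<in> T" for h
    using n(1) that unfolding nx by (metis of_nat_add prime_nat_int_transfer)
  have xbig: "x > N0" using n(2) nx by simp
  have xZ: "x > Z" using xbig unfolding N0_def by simp
  have xb: "b i < x" if "i < k" for i
  proof -
    have "b i \<le> (\<Sum>i<k. b i)" using that by (intro member_le_sum) auto
    thus ?thesis using xbig unfolding N0_def by simp
  qed
  have xc: "x mod p = c p" if p: "prime p" "p \<le> 2*k+3" for p
  proof (rule ccontr)
    assume ne: "x mod p \<noteq> c p"
    note cp = c[OF p]
    have p0: "p > 0" using p prime_gt_0_nat by blast
    define m where "m = x mod p"
    have m: "m < p" unfolding m_def using p0 by simp
    define r where "r = (p - m) mod p"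
    have rp: "r < p" unfolding r_def using p0 by simp
    have rne: "r \<noteq> (p - c p) mod p"
    proof (cases "m = 0")
      case True
      then show ?thesis unfolding r_def using cp by simp
    next
      case False
      have mne: "m \<noteq> c p" using ne m_def by simp
      have e1: "(p - m) mod p = p - m" using False m by simp
      have e2: "(p - c p) mod p = p - c p" using cp by simp
      show ?thesis unfolding r_def e1 e2 using mne m cp by linarith
    qed
    have D: "(p, r) \<in> D" unfolding D_def using p rp rne by simp
    hence hT: "a p r \<in> T" unfolding T_def A_def by force
    have ar: "a p r mod p = r" using a[OF p(1) rp] by simp
    have "(x + a p r) mod p = (m + r) mod p" unfolding m_def by (metis ar mod_add_eq)
    also have "(m + r) mod p = 0"
    proof (cases "m = 0")
      case True then show ?thesis unfolding r_def by simp
    next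
      case False then show ?thesis unfolding r_def using m by simp
    qed
    finally have "(x + a p r) mod p = 0" .
    moreover have "p < x + a p r" using xZ p(2) Zbig by linarith
    ultimately show False using prime_not_dvd_big[OF p(1) xT[OF hT]] by simp
  qed
  have xp: "prime x" using xT[of 0] unfolding T_def by simp
  have xe: "prime (x + b e + 1)" if "e < k" for e
    using xT[of "b e + 1"] that unfolding T_def by (simp add: add.assoc)
  have x2: "2*k+3 < x" using xZ Zbig by linarith
  have xc2: "(2*x+1) mod p \<noteq> 0" if p: "prime p" "p \<le> 2*k+3" for p
  proof -
    have "[x = c p] (mod p)" using xc[OF p] c[OF p] by (simp add: cong_def)
    hence "[2*x+1 = 2*c p+1] (mod p)" by (intro cong_add cong_mult cong_refl)
    hence "(2*x+1) mod p = (2*c p+1) mod p" by (simp add: cong_def)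
    thus ?thesis using c[OF p] by simp
  qed
  have M5: "b l mod p = x mod p" if "prime p" "l < k" "p \<le> 2*l+3" "p \<le> 2*k+3" for p l
    using c[OF that(1) that(4)] xc[OF that(1) that(4)] that by simp
  show ?thesis
  proof (rule exI[of _ x])
    show "Inv (Suc k) (b(k:=x))" by (rule inv_extend[OF inv xp xe x2 xb M5 xc2])
qed
qed

theorem mainTheorem1:
  assumes "DHL"
  shows "\<exists>B::nat set. infinite B \<and> (\<forall>b\<in>B. prime b) \<and>
           (\<forall>b\<in>B. \<forall>b'\<in>B. b \<noteq> b' \<longrightarrow> prime (b + b' + 1))"
proof -
  have "\<exists>f. \<forall>n. Inv n (f n) \<and> f (Suc n) = (f n)(n := f (Suc n) n)"
  proof (rule dependent_nat_choice[where P=Inv and Q="\<lambda>n x y. y = x(n := y n)"])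
    show "\<exists>x. Inv 0 x" unfolding Inv_def by simp
  next
    fix x n assume "Inv n x"
    then obtain z where "Inv (Suc n) (x(n:=z))" using step[OF assms] by blast
    then show "\<exists>y. Inv (Suc n) y \<and> y = x(n := y n)" by (intro exI[of _ "x(n:=z)"]) simp
  qed
  then obtain f where f: "\<And>n. Inv n (f n)" "\<And>n. f (Suc n) = (f n)(n := f (Suc n) n)" by blast
  have agree: "f m i = f (Suc i) i" if "i < m" for m i
    using that
  proof (induction m)
    case 0 then show ?case by simp
  next
    case (Suc m)
    show ?case
    proof (cases "i = m")
      case True then show ?thesis by simp
    next
      case False
      hence "i < m" using Suc.prems by simp
      have "f (Suc m) i = f m i" using f(2)[of m] False by (metis fun_upd_other)
      then show ?thesis using Suc.IH[OF \<open>i < m\<close>] by simp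
    qed
  qed
  define g where "g i = f (Suc i) i" for i
  have gm: "f m i = g i" if "i < m" for m i using agree[OF that] g_def by simp
  have gp: "prime (g i)" for i
  proof -
    have "\<forall>j<Suc i. prime (f (Suc i) j)" using f(1)[of "Suc i"] unfolding Inv_def by blast
    hence "prime (f (Suc i) i)" by blast
    thus ?thesis unfolding g_def .
  qed
  have gbig: "2*i+3 < g i" for i
  proof -
    have "\<forall>j<Suc i. 2*j+3 < f (Suc i) j" using f(1)[of "Suc i"] unfolding Inv_def by blast
    hence "2*i+3 < f (Suc i) i" by blast
    thus ?thesis unfolding g_def .
  qed
  have gpair: "prime (g i + g l + 1)" if "i \<noteq> l" for i l
  proof -
    define m where "m = Suc (max i l)"
    have "i < m" "l < m" unfolding m_def by auto
    moreover have "\<forall>i<m. \<forall>l<m. i \<noteq> l \<longrightarrow> prime (f m i + f m l + 1)" using f(1)[of m] unfolding Inv_def by blast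
    ultimately have "prime (f m i + f m l + 1)" using that by blast
    thus ?thesis using gm \<open>i < m\<close> \<open>l < m\<close> by simp
  qed
  show ?thesis
  proof (intro exI[of _ "range g"] conjI)
    show "infinite (range g)"
    proof
      assume "finite (range g)"
      then obtain M where "\<forall>y\<in>range g. y \<le> M" using finite_nat_set_iff_bounded_le by blast
      hence "g M \<le> M" by blast
      thus False using gbig[of M] by linarith
    qed
    show "\<forall>b\<in>range g. prime b" using gp by simp
    show "\<forall>b\<in>range g. \<forall>b'\<in>range g. b \<noteq> b' \<longrightarrow> prime (b + b' + 1)"
    proof (intro ballI impI)
      fix b b' assume "b \<in> range g" "b' \<in> range g" "b \<noteq> b'"
      then obtain i l where "b = g i" "b' = g l" "i \<noteq> l" by auto
      thus "prime (b + b' + 1)" using gpair by simp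
    qed
  qed
qed

end
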